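(* Let $k$ be a field and let $M$ be a finitely generated, commutative, cancellative monoid whose group completion $M^{\mathrm{gp}}$ is torsion-free, and let $X=\operatorname{Spec} k[M]$. Let $M^\times\subseteq M$ be the group of units of $M$ and $Y=\operatorname{Spec} k[M^\times]$. Let $\pi\colon X\to Y$ be the morphism induced by the inclusion $M^\times\hookrightarrow M$, and let $i\colon Y\to X$ be the morphism induced by the monoid map $M\to M^\times\cup\{0\}$ that is the identity on $M^\times$ and sends $M\setminus M^\times$ to $0$. Then $i$ and $\pi$ are mutually inverse naive $\mathbf A^1$-homotopy equivalences: $\pi\circ i=\mathrm{id}_Y$, and $i\circ\pi$ is naively $\mathbf A^1$-homotopic to $\mathrm{id}_X$.
   Context: Two morphisms $f,g\colon X\to X'$ of $k$-schemes are naively $\mathbf A^1$-homotopic if they are related by the equivalence relation generated by: $f\sim g$ whenever there is a morphism $h\colon \mathbf A^1_k\times_k X\to X'$ with $h|_{\{0\}\times X}=f$ and $h|_{\{1\}\times X}=g$. Such an $X$ is called a split affine toric variety; $i$ embeds $Y$ as the unique closed torus orbit of $X$. *)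

theory Defs
  imports "HOL-Library.Poly_Mapping" "HOL-Computational_Algebra.Polynomial"
begin

(* The monoid algebra k[M] of a commutative monoid M (written additively, as the
  type 'm) over a field k is the type ('m \<Rightarrow>\<^sub>0 'k) of finitely supported functions
  with convolution product.  Its k-algebra structure map is c \<mapsto> c e_0. *)

definition kmon :: "'k::zero \<Rightarrow> ('m::zero \<Rightarrow>\<^sub>0 'k)" where
  "kmon c = Poly_Mapping.single 0 c"

(* The k-algebra structure map of A[t] = k[M][t], the coordinate ring of A^1 x X. *)
definition kmon_poly :: "'k::zero \<Rightarrow> ('m::zero \<Rightarrow>\<^sub>0 'k) poly" where
  "kmon_poly c = [: kmon c :]"

definition kalg_hom :: "('k \<Rightarrow> 'a::comm_ring_1) \<Rightarrow> ('k \<Rightarrow> 'b::comm_ring_1) \<Rightarrow> ('a \<Rightarrow> 'b) \<Rightarrow> bool" where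
  "kalg_hom \<sigma> \<tau> \<phi> \<longleftrightarrow>
     (\<forall>x y. \<phi> (x + y) = \<phi> x + \<phi> y) \<and> (\<forall>x y. \<phi> (x * y) = \<phi> x * \<phi> y) \<and>
     \<phi> 1 = 1 \<and> (\<forall>c. \<phi> (\<sigma> c) = \<tau> c)"

(* Algebra map k[M] \<rightarrow> k[N] induced by a pointed monoid map g : M \<rightarrow> N \<union> {0}
  (None plays the role of the adjoined zero): e_m \<mapsto> e_{g m}, resp. 0 if g m = None. *)
definition alg_ind :: "('m \<Rightarrow> 'n option) \<Rightarrow> ('m \<Rightarrow>\<^sub>0 'k::comm_ring_1) \<Rightarrow> ('n::zero \<Rightarrow>\<^sub>0 'k)" where
  "alg_ind g f = (\<Sum>m\<in>Poly_Mapping.keys f. case g m of None \<Rightarrow> 0 | Some n \<Rightarrow> Poly_Mapping.single n (Poly_Mapping.lookup f m))"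

(* The monoid map M \<rightarrow> M^\<times> \<union> {0}: identity on units (identified with the type 'u
  via iota), and non-units go to 0 (= None). *)
definition unit_retr :: "('u \<Rightarrow> 'm) \<Rightarrow> 'm \<Rightarrow> 'u option" where
  "unit_retr \<iota> m = (if m \<in> range \<iota> then Some (inv \<iota> m) else None)"

definition mon_units :: "'m::comm_monoid_add set" where
  "mon_units = {m. \<exists>n. m + n = 0}"

inductive_set mon_gen :: "'m::monoid_add set \<Rightarrow> 'm set" for S where
  zero: "0 \<in> mon_gen S"
| gen: "s \<in> S \<Longrightarrow> s \<in> mon_gen S"
| add: "a \<in> mon_gen S \<Longrightarrow> b \<in> mon_gen S \<Longrightarrow> a + b \<in> mon_gen S"

definition fin_gen_monoid :: "'m::monoid_add itself \<Rightarrow> bool" where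
  "fin_gen_monoid _ \<longleftrightarrow> (\<exists>S::'m set. finite S \<and> mon_gen S = UNIV)"

definition nsmul :: "nat \<Rightarrow> 'm::comm_monoid_add \<Rightarrow> 'm" where
  "nsmul n a = (\<Sum>i<n. a)"

(* For a cancellative commutative monoid M, the group completion M^gp is torsion-free
  iff for all a b \<in> M and n > 0, n.a = n.b implies a = b (elements of M^gp are a - b,
  and n(a - b) = 0 in M^gp iff n.a = n.b in M by cancellativity). *)
definition gp_torsion_free :: "'m::cancel_comm_monoid_add itself \<Rightarrow> bool" where
  "gp_torsion_free _ \<longleftrightarrow> (\<forall>(a::'m) b n. n > 0 \<longrightarrow> nsmul n a = nsmul n b \<longrightarrow> a = b)"

(* Naive A^1-homotopy of morphisms Spec k[M] \<rightarrow> Spec k[M], expressed on the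
  corresponding k-algebra endomorphisms of k[M] (anti-equivalence of affine k-schemes
  and k-algebras; A^1 x Spec k[M] = Spec k[M][t]; restriction to {0} x X, {1} x X is
  evaluation at t = 0, 1). *)
definition naive_htpy_step :: "(('m::comm_monoid_add \<Rightarrow>\<^sub>0 'k::field) \<Rightarrow> ('m \<Rightarrow>\<^sub>0 'k)) \<Rightarrow>
    (('m \<Rightarrow>\<^sub>0 'k) \<Rightarrow> ('m \<Rightarrow>\<^sub>0 'k)) \<Rightarrow> bool" where
  "naive_htpy_step f g \<longleftrightarrow>
     (\<exists>H. kalg_hom kmon kmon_poly H \<and> (\<lambda>a. poly (H a) 0) = f \<and> (\<lambda>a. poly (H a) 1) = g)"

definition naive_A1_homotopic :: "(('m::comm_monoid_add \<Rightarrow>\<^sub>0 'k::field) \<Rightarrow> ('m \<Rightarrow>\<^sub>0 'k)) \<Rightarrow>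
    (('m \<Rightarrow>\<^sub>0 'k) \<Rightarrow> ('m \<Rightarrow>\<^sub>0 'k)) \<Rightarrow> bool" where
  "naive_A1_homotopic = equivclp naive_htpy_step"

end

theory Submission
  imports Defs
begin

definition dotp :: "nat \<Rightarrow> (nat \<Rightarrow> rat) \<Rightarrow> (nat \<Rightarrow> rat) \<Rightarrow> rat" where
  "dotp n a w = (\<Sum>k<n. a k * w k)"

inductive_set vcone :: "(nat \<Rightarrow> rat) set \<Rightarrow> (nat \<Rightarrow> rat) set" for R where
  vzero: "(\<lambda>k. 0) \<in> vcone R"
| vstep: "r \<in> R \<Longrightarrow> c \<ge> 0 \<Longrightarrow> u \<in> vcone R \<Longrightarrow> (\<lambda>k. c * r k + u k) \<in> vcone R"

definition ntcone :: "(nat \<Rightarrow> rat) set \<Rightarrow> (nat \<Rightarrow> rat) set" where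
  "ntcone R = {v. \<exists>r\<in>R. \<exists>c>0. \<exists>u\<in>vcone R. v = (\<lambda>k. c * r k + u k)}"

definition subsp :: "(nat \<Rightarrow> rat) set \<Rightarrow> bool" where
  "subsp E \<longleftrightarrow> (\<lambda>k. 0) \<in> E \<and> (\<forall>a\<in>E. \<forall>b\<in>E. (\<lambda>k. a k + b k) \<in> E) \<and> (\<forall>a\<in>E. \<forall>c. (\<lambda>k. c * a k) \<in> E)"

lemma subsp_add: "subsp E \<Longrightarrow> a \<in> E \<Longrightarrow> b \<in> E \<Longrightarrow> (\<lambda>k. a k + b k) \<in> E"
  unfolding subsp_def by blast

lemma ntconeI: "r \<in> R \<Longrightarrow> c > 0 \<Longrightarrow> u \<in> vcone R \<Longrightarrow> (\<lambda>k. c * r k + u k) \<in> ntcone R"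
  unfolding ntcone_def by blast

lemma vcone_add: "u \<in> vcone R \<Longrightarrow> v \<in> vcone R \<Longrightarrow> (\<lambda>k. u k + v k) \<in> vcone R"
proof (induction u rule: vcone.induct)
  case vzero then show ?case by simp
next
  case (vstep r c u)
  then have "(\<lambda>k. c * r k + (u k + v k)) \<in> vcone R" by (intro vcone.vstep) auto
  then show ?case by (simp add: add.assoc)
qed

lemma vcone_scale: "u \<in> vcone R \<Longrightarrow> c \<ge> 0 \<Longrightarrow> (\<lambda>k. c * u k) \<in> vcone R"
proof (induction u rule: vcone.induct)
  case vzero then show ?case by (simp add: vcone.vzero)
next
  case (vstep r d u)
  then have "(\<lambda>k. (c * d) * r k + c * u k) \<in> vcone R" by (intro vcone.vstep) auto
  then show ?case by (simp add: algebra_simps)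
qed

lemma vcone_mono: "u \<in> vcone R' \<Longrightarrow> R' \<subseteq> vcone R \<Longrightarrow> u \<in> vcone R"
proof (induction u rule: vcone.induct)
  case vzero then show ?case by (simp add: vcone.vzero)
next
  case (vstep r c u)
  then show ?case using vcone_add[OF vcone_scale] by auto
qed

lemma vcone_coord0: "u \<in> vcone R \<Longrightarrow> \<forall>r\<in>R. r n = 0 \<Longrightarrow> u n = 0"
  by (induction u rule: vcone.induct) auto

lemma vcone_T:
  fixes T :: "(nat \<Rightarrow> rat) \<Rightarrow> (nat \<Rightarrow> rat)" and d :: "nat \<Rightarrow> rat" and n :: nat
  assumes T_def: "T = (\<lambda>v k. v k - v n / d n * d k)"
  shows "u \<in> vcone (T ` R) \<Longrightarrow> \<exists>v\<in>vcone R. u = T v"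
proof (induction u rule: vcone.induct)
  case vzero
  have "(\<lambda>k. 0) = T (\<lambda>k. 0)" by (simp add: T_def)
  then show ?case using vcone.vzero by blast
next
  case (vstep r c u)
  then obtain r0 v where r0: "r0 \<in> R" "r = T r0" and v: "v \<in> vcone R" "u = T v" by auto
  have "(\<lambda>k. c * r0 k + v k) \<in> vcone R" using r0 v vstep by (intro vcone.vstep) auto
  moreover have "(\<lambda>k. c * r k + u k) = T (\<lambda>k. c * r0 k + v k)"
    unfolding r0 v T_def by (auto simp: algebra_simps add_divide_distrib diff_divide_distrib)
  ultimately show ?case by blast
qed

lemma ntcone_T:
  fixes T :: "(nat \<Rightarrow> rat) \<Rightarrow> (nat \<Rightarrow> rat)" and d :: "nat \<Rightarrow> rat" and n :: nat
  assumes T_def: "T = (\<lambda>v k. v k - v n / d n * d k)"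
  assumes "u \<in> ntcone (T ` R)"
  shows "\<exists>v\<in>ntcone R. u = T v"
proof -
  obtain r c w where r: "r \<in> T ` R" "c > 0" "w \<in> vcone (T ` R)" "u = (\<lambda>k. c * r k + w k)"
    using assms(2) unfolding ntcone_def by blast
  obtain r0 where r0: "r0 \<in> R" "r = T r0" using r by auto
  obtain v where v: "v \<in> vcone R" "w = T v" using vcone_T[OF T_def r(3)] by blast
  have "(\<lambda>k. c * r0 k + v k) \<in> ntcone R" unfolding ntcone_def using r0 v r by blast
  moreover have "u = T (\<lambda>k. c * r0 k + v k)"
    unfolding r r0 v T_def by (auto simp: algebra_simps add_divide_distrib diff_divide_distrib)
  ultimately show ?thesis by blast
qed

lemma pick_between:
  fixes Lo Up :: "rat set"
  assumes "finite Lo" "finite Up" "\<And>l u. l \<in> Lo \<Longrightarrow> u \<in> Up \<Longrightarrow> l < u"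
  shows "\<exists>t. (\<forall>l\<in>Lo. l < t) \<and> (\<forall>u\<in>Up. t < u)"
proof (cases "Lo = {}")
  case True
  show ?thesis
  proof (cases "Up = {}")
    case True then show ?thesis using \<open>Lo = {}\<close> by auto
  next
    case False
    then show ?thesis using \<open>Lo = {}\<close> assms
      by (intro exI[of _ "Min Up - 1"]) (auto dest: Min_le[rotated])
  qed
next
  case False
  show ?thesis
  proof (cases "Up = {}")
    case True then show ?thesis using \<open>Lo \<noteq> {}\<close> assms
      by (intro exI[of _ "Max Lo + 1"]) (auto dest: Max_ge[rotated])
  next
    case F2: False
    have "Max Lo < Min Up" using assms False F2 by auto
    moreover have "\<forall>l\<in>Lo. l \<le> Max Lo" "\<forall>u\<in>Up. Min Up \<le> u" using assms by auto
    ultimately show ?thesis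
      by (intro exI[of _ "(Max Lo + Min Up) / 2"]) force
  qed
qed

lemma dotp_Suc: "dotp (Suc n) a w = dotp n a w + a n * w n"
  by (simp add: dotp_def)

lemma dotp_cong: "(\<And>k. k < n \<Longrightarrow> w k = w' k) \<Longrightarrow> dotp n a w = dotp n a w'"
  by (simp add: dotp_def)

lemma dotp_upd [simp]: "dotp n a (w(n := t)) = dotp n a w"
  by (simp add: dotp_def)

lemma dotp_T: "dotp n (\<lambda>k. x k - c * d k) w = dotp n x w - c * dotp n d w"
  by (simp add: dotp_def algebra_simps sum_subtractf sum_distrib_left)

lemma dotp_comb: "dotp n (\<lambda>k. a * x k + b * y k) w = a * dotp n x w + b * dotp n y w"
  by (simp add: dotp_def algebra_simps sum.distrib sum_distrib_left)

theorem FM: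
  "finite R \<Longrightarrow> subsp E \<Longrightarrow>
    (\<exists>w. (\<forall>e\<in>E. dotp n e w = 0) \<and> (\<forall>r\<in>R. dotp n r w > 0)) \<or> (\<exists>v\<in>ntcone R. \<exists>e\<in>E. \<forall>k<n. v k = e k)"
proof (induction n arbitrary: R E)
  case 0
  show ?case
  proof (cases "R = {}")
    case True then show ?thesis by (simp add: dotp_def)
  next
    case False
    then obtain r where r: "r \<in> R" by auto
    have "(\<lambda>k. 1 * r k + 0) \<in> ntcone R" unfolding ntcone_def
      by (rule CollectI, rule bexI[OF _ r], rule exI[of _ 1], simp, rule bexI[OF _ vcone.vzero], simp)
    then have "r \<in> ntcone R" by simp
    then show ?thesis using 0 unfolding subsp_def by auto
  qed
next
  case (Suc n)
  show ?case
  proof (cases "\<exists>d\<in>E. d n \<noteq> 0")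
    case True
    then obtain d where d: "d \<in> E" "d n \<noteq> 0" by auto
    define T where "T = (\<lambda>(v::nat\<Rightarrow>rat) k. v k - v n / d n * d k)"
    have Tlin: "T (\<lambda>k. a * x k + b * y k) = (\<lambda>k. a * T x k + b * T y k)" for a b x y
      unfolding T_def by (auto simp: algebra_simps add_divide_distrib diff_divide_distrib)
    have sE: "subsp (T ` E)"
    proof -
      have z: "(\<lambda>k. 0) = T (\<lambda>k. 0)" by (simp add: T_def)
      have a: "(\<lambda>k. T a k + T b k) = T (\<lambda>k. a k + b k)" for a b
        using Tlin[of 1 a 1 b] by simp
      have c: "(\<lambda>k. c * T a k) = T (\<lambda>k. c * a k)" for a c
        using Tlin[of c a 0 a] by simp
      have E: "(\<lambda>k. 0) \<in> E" "\<And>a b. a \<in> E \<Longrightarrow> b \<in> E \<Longrightarrow> (\<lambda>k. a k + b k) \<in> E"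
        "\<And>a c. a \<in> E \<Longrightarrow> (\<lambda>k. c * a k) \<in> E"
        using Suc.prems(2) unfolding subsp_def by blast+
      show ?thesis unfolding subsp_def
      proof (intro conjI ballI allI)
        show "(\<lambda>k. 0) \<in> T ` E" by (subst z) (rule imageI[OF E(1)])
      next
        fix x y assume "x \<in> T ` E" "y \<in> T ` E"
        then obtain a b where "a \<in> E" "b \<in> E" "x = T a" "y = T b" by auto
        then show "(\<lambda>k. x k + y k) \<in> T ` E" using a[of a b] E(2)[of a b] by auto
      next
        fix x c assume "x \<in> T ` E"
        then obtain a where "a \<in> E" "x = T a" by auto
        then show "(\<lambda>k. c * x k) \<in> T ` E" using c[of c a] E(3)[of a c] by auto
      qed
    qed
    have dT: "dotp (Suc n) x (w(n := - dotp n d w / d n)) = dotp n (T x) w" for x w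
    proof -
      have "dotp (Suc n) x (w(n := - dotp n d w / d n)) = dotp n x w + x n * (- dotp n d w / d n)"
        by (simp add: dotp_Suc)
      also have "\<dots> = dotp n (T x) w" unfolding T_def dotp_T by (simp add: algebra_simps)
      finally show ?thesis .
    qed
    from Suc.IH[OF finite_imageI[OF Suc.prems(1)] sE, of T]
    show ?thesis
    proof
      assume "\<exists>w. (\<forall>e\<in>T ` E. dotp n e w = 0) \<and> (\<forall>r\<in>T ` R. 0 < dotp n r w)"
      then obtain w where w: "\<forall>e\<in>T ` E. dotp n e w = 0" "\<forall>r\<in>T ` R. 0 < dotp n r w" by blast
      have "\<forall>e\<in>E. dotp (Suc n) e (w(n := - dotp n d w / d n)) = 0"
        using w by (simp only: dT) auto
      moreover have "\<forall>r\<in>R. 0 < dotp (Suc n) r (w(n := - dotp n d w / d n))"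
        using w by (simp only: dT) auto
      ultimately show ?thesis by blast
    next
      assume "\<exists>v\<in>ntcone (T ` R). \<exists>e\<in>T ` E. \<forall>k<n. v k = e k"
      then obtain v' e0 where v': "v' \<in> ntcone (T ` R)" and e0: "e0 \<in> E" "\<forall>k<n. v' k = T e0 k"
        by blast
      obtain v where v: "v \<in> ntcone R" "v' = T v" using ntcone_T[OF T_def v'] by blast
      define e where "e = (\<lambda>k. e0 k + ((v n - e0 n) / d n) * d k)"
      have "e \<in> E"
      proof -
        have "(\<lambda>k. ((v n - e0 n) / d n) * d k) \<in> E" using Suc.prems(2) d unfolding subsp_def by blast
        from subsp_add[OF Suc.prems(2) e0(1) this] show ?thesis unfolding e_def by simp
      qed
      moreover have "\<forall>k<Suc n. v k = e k"
      proof (intro allI impI)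
        fix k assume "k < Suc n"
        then consider "k < n" | "k = n" by linarith
        then show "v k = e k"
        proof cases
          case 1
          then have "v k - v n / d n * d k = e0 k - e0 n / d n * d k"
            using e0 v unfolding T_def by auto
          then show ?thesis unfolding e_def by (simp add: algebra_simps diff_divide_distrib)
        next
          case 2 then show ?thesis unfolding e_def using d by simp
        qed
      qed
      ultimately show ?thesis using v by blast
    qed
  next
    case False
    then have En: "\<forall>e\<in>E. e n = 0" by auto
    define P where "P = {r\<in>R. r n > 0}"
    define Ng where "Ng = {r\<in>R. r n < 0}"
    define Z where "Z = {r\<in>R. r n = 0}"
    define cb where "cb = (\<lambda>(p::nat\<Rightarrow>rat, q::nat\<Rightarrow>rat). (\<lambda>k. (- q n) * p k + p n * q k))"
    define R' where "R' = Z \<union> cb ` (P \<times> Ng)"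
    have "finite P" "finite Ng" "finite Z" using Suc.prems(1) unfolding P_def Ng_def Z_def by auto
    then have fin: "finite R'" unfolding R'_def by blast
    have R'c: "R' \<subseteq> vcone R"
    proof
      fix x assume "x \<in> R'"
      then consider "x \<in> Z" | p q where "p \<in> P" "q \<in> Ng" "x = cb (p, q)" unfolding R'_def by auto
      then show "x \<in> vcone R"
      proof cases
        case 1
        then have "x \<in> R" unfolding Z_def by blast
        from vcone.vstep[OF this _ vcone.vzero, of 1] show ?thesis by simp
      next
        case 2
        then have "(\<lambda>k. (- q n) * p k + (p n * q k + 0)) \<in> vcone R"
          unfolding P_def Ng_def by (intro vcone.vstep vcone.vzero) auto
        then show ?thesis using 2 unfolding cb_def by simp
      qed
    qed
    have R'n: "\<forall>r\<in>R'. r n = 0" unfolding R'_def Z_def cb_def by auto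
    from Suc.IH[OF fin Suc.prems(2)]
    show ?thesis
    proof
      assume "\<exists>w. (\<forall>e\<in>E. dotp n e w = 0) \<and> (\<forall>r\<in>R'. 0 < dotp n r w)"
      then obtain w where w: "\<forall>e\<in>E. dotp n e w = 0" "\<forall>r\<in>R'. 0 < dotp n r w" by blast
      define Lo where "Lo = (\<lambda>p. - dotp n p w / p n) ` P"
      define Up where "Up = (\<lambda>q. - dotp n q w / q n) ` Ng"
      have "\<exists>t. (\<forall>l\<in>Lo. l < t) \<and> (\<forall>u\<in>Up. t < u)"
      proof (rule pick_between)
        show "finite Lo" "finite Up" unfolding Lo_def Up_def P_def Ng_def using Suc.prems(1) by auto
        fix l u assume "l \<in> Lo" "u \<in> Up"
        then obtain p q where pq: "p \<in> P" "q \<in> Ng" "l = - dotp n p w / p n" "u = - dotp n q w / q n"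
          unfolding Lo_def Up_def by auto
        have "cb (p, q) \<in> R'" unfolding R'_def using pq by auto
        then have "0 < dotp n (cb (p,q)) w" using w by auto
        moreover have "cb (p, q) = (\<lambda>k. (- q n) * p k + p n * q k)" by (simp add: cb_def)
        ultimately have h: "0 < (- q n) * dotp n p w + p n * dotp n q w" by (simp only: dotp_comb)
        have pn: "p n > 0" and qn: "q n < 0" using pq unfolding P_def Ng_def by auto
        show "l < u" unfolding pq using h pn qn by (simp add: field_simps)
      qed
      then obtain t where t: "\<forall>l\<in>Lo. l < t" "\<forall>u\<in>Up. t < u" by blast
      have "\<forall>r\<in>R. 0 < dotp (Suc n) r (w(n := t))"
      proof
        fix r assume r: "r \<in> R"
        have eq: "dotp (Suc n) r (w(n := t)) = dotp n r w + r n * t"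
          by (simp add: dotp_Suc)
        consider "r n > 0" | "r n < 0" | "r n = 0" by linarith
        then show "0 < dotp (Suc n) r (w(n := t))"
        proof cases
          case 1
          then have "- dotp n r w / r n < t" using t r unfolding Lo_def P_def by auto
          then show ?thesis unfolding eq using 1 by (simp add: field_simps)
        next
          case 2
          then have "t < - dotp n r w / r n" using t r unfolding Up_def Ng_def by auto
          then show ?thesis unfolding eq using 2 by (simp add: field_simps)
        next
          case 3
          then have "r \<in> R'" using r unfolding R'_def Z_def by auto
          then show ?thesis unfolding eq using 3 w by auto
        qed
      qed
      moreover have "\<forall>e\<in>E. dotp (Suc n) e (w(n := t)) = 0"
        using w En by (simp add: dotp_Suc)
      ultimately show ?thesis by blast
    next
      assume "\<exists>v\<in>ntcone R'. \<exists>e\<in>E. \<forall>k<n. v k = e k"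
      then obtain v e where v: "v \<in> ntcone R'" and e: "e \<in> E" "\<forall>k<n. v k = e k" by blast
      obtain r c u where rcu: "r \<in> R'" "c > 0" "u \<in> vcone R'" "v = (\<lambda>k. c * r k + u k)"
        using v unfolding ntcone_def by blast
      have uR: "u \<in> vcone R" using vcone_mono[OF rcu(3) R'c] .
      have vn: "v n = 0" using rcu R'n vcone_coord0[OF rcu(3) R'n] by simp
      have "v \<in> ntcone R"
      proof -
        consider "r \<in> Z" | p q where "p \<in> P" "q \<in> Ng" "r = cb (p, q)" using rcu(1) unfolding R'_def by auto
        then show ?thesis
        proof cases
          case 1 then show ?thesis unfolding ntcone_def Z_def using rcu uR by blast
        next
          case 2
          have "(\<lambda>k. (c * p n) * q k + u k) \<in> vcone R"
            using 2 rcu uR unfolding P_def Ng_def by (intro vcone.vstep) auto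
          moreover have "c * (- q n) > 0" using 2 rcu unfolding Ng_def by (simp add: mult_pos_neg)
          moreover have "v = (\<lambda>k. (c * (- q n)) * p k + ((c * p n) * q k + u k))"
            unfolding rcu 2 cb_def by (auto simp: algebra_simps)
          moreover have "p \<in> R" using 2 unfolding P_def by blast
          ultimately show ?thesis using ntconeI[of p R "c * (- q n)" "\<lambda>k. (c * p n) * q k + u k"] by simp
        qed
      qed
      moreover have "\<forall>k<Suc n. v k = e k"
        using e vn En by (metis less_Suc_eq)
      ultimately show ?thesis using e by blast
    qed
  qed
qed


lemma nsmul_0 [simp]: "nsmul 0 x = 0" by (simp add: nsmul_def)
lemma nsmul_Suc: "nsmul (Suc p) x = nsmul p x + x" by (simp add: nsmul_def)
lemma nsmul_Suc0 [simp]: "nsmul (Suc 0) x = x" by (simp add: nsmul_def)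
lemma nsmul_1 [simp]: "nsmul 1 x = x" by (simp add: nsmul_def)
lemma nsmul_add_n: "nsmul (p + q) x = nsmul p x + nsmul q x"
  by (induction q) (simp_all add: nsmul_Suc add.assoc)
lemma nsmul_zero [simp]: "nsmul p (0::'a::comm_monoid_add) = 0" by (simp add: nsmul_def)
lemma nsmul_add_x: "nsmul p (x + y) = nsmul p x + nsmul p (y::'a::comm_monoid_add)"
  by (simp add: nsmul_def sum.distrib)
lemma nsmul_mult: "nsmul (p * q) x = nsmul p (nsmul q x)"
  by (induction p) (simp_all add: nsmul_Suc nsmul_add_n add.commute)
lemma nsmul_sum: "nsmul p (sum f A) = (\<Sum>i\<in>A. nsmul p (f i))"
  by (induction p) (simp_all add: nsmul_Suc sum.distrib)

lemma units_0: "0 \<in> mon_units" by (simp add: mon_units_def)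
lemma units_add: "a \<in> mon_units \<Longrightarrow> b \<in> mon_units \<Longrightarrow> a + b \<in> (mon_units::'a::comm_monoid_add set)"
  unfolding mon_units_def
proof clarsimp
  fix n m assume "a + n = 0" "b + m = 0"
  then have "a + b + (n + m) = 0" by (metis add.assoc add.left_commute add_0_right)
  then show "\<exists>k. a + b + k = 0" by blast
qed
lemma units_left: "a + b \<in> mon_units \<Longrightarrow> a \<in> (mon_units::'a::comm_monoid_add set)"
  unfolding mon_units_def
proof clarsimp
  fix n assume "a + b + n = 0"
  then have "a + (b + n) = 0" by (simp add: add.assoc)
  then show "\<exists>k. a + k = 0" by blast
qed
lemma units_nsmul: "a \<in> mon_units \<Longrightarrow> nsmul p a \<in> (mon_units::'a::comm_monoid_add set)"
  by (induction p) (simp_all add: nsmul_Suc units_0 units_add)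
lemma units_sum: "(\<forall>k\<in>A. f k \<in> mon_units) \<Longrightarrow> sum f A \<in> (mon_units::'a::comm_monoid_add set)"
  by (induction A rule: infinite_finite_induct) (simp_all add: units_0 units_add)
lemma units_inv: "a \<in> mon_units \<Longrightarrow> \<exists>b\<in>mon_units. a + b = (0::'a::comm_monoid_add)"
  unfolding mon_units_def
proof clarsimp
  fix n assume "a + n = 0"
  then have "n + a = 0" "a + n = 0" by (simp_all add: add.commute)
  then show "\<exists>b. (\<exists>k. b + k = 0) \<and> a + b = 0" by blast
qed

lemma clear_denoms: "\<exists>D::nat. D > 0 \<and> (\<forall>k<(n::nat). of_nat D * (w k :: rat) \<in> \<int>)"
proof (induction n)
  case 0 then show ?case by (intro exI[of _ 1]) auto
next
  case (Suc n)
  then obtain D where D: "D > 0" "\<forall>k<n. of_nat D * w k \<in> \<int>" by blast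
  obtain p q where pq: "quotient_of (w n) = (p, q)" by (cases "quotient_of (w n)")
  have q: "q > 0" using quotient_of_denom_pos[OF pq] .
  have wn: "w n = of_int p / of_int q" using quotient_of_div[OF pq] .
  define D' where "D' = D * nat q"
  have "D' > 0" using D q unfolding D'_def by simp
  moreover have "\<forall>k<Suc n. of_nat D' * w k \<in> \<int>"
  proof (intro allI impI)
    fix k assume "k < Suc n"
    then consider "k < n" | "k = n" by linarith
    then show "of_nat D' * w k \<in> \<int>"
    proof cases
      case 1
      have eq: "of_nat D' * w k = of_int q * (of_nat D * w k)" using q by (simp add: D'_def of_nat_mult of_nat_nat mult_ac)
      have mem: "of_int q * (of_nat D * w k) \<in> \<int>" using D(2) 1 by (intro Ints_mult[OF Ints_of_int]) auto
      show ?thesis unfolding eq by (rule mem)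
    next
      case 2
      have "of_nat D' * w k = of_nat D * of_int p" using q by (simp add: D'_def 2 wn of_nat_mult of_nat_nat mult_ac)
      then show ?thesis by simp
    qed
  qed
  ultimately show ?case by blast
qed

definition lincomb :: "nat \<Rightarrow> (nat \<Rightarrow> 'm) \<Rightarrow> (nat \<Rightarrow> nat) \<Rightarrow> 'm::comm_monoid_add" where
  "lincomb n g a = (\<Sum>i<n. nsmul (a i) (g i))"

definition uvec :: "nat \<Rightarrow> nat \<Rightarrow> rat" where "uvec j = (\<lambda>k. if k = j then 1 else 0)"

lemma lincomb_add: "lincomb n g (\<lambda>k. a k + b k) = lincomb n g a + lincomb n g b"
  by (simp add: lincomb_def nsmul_add_n sum.distrib)
lemma lincomb_scale: "lincomb n g (\<lambda>k. p * a k) = nsmul p (lincomb n g a)"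
  by (simp add: lincomb_def nsmul_mult nsmul_sum)
lemma lincomb_zero: "lincomb n g (\<lambda>k. 0) = 0"
  by (simp add: lincomb_def)
lemma lincomb_unit: "j < n \<Longrightarrow> lincomb n g (\<lambda>k. if k = j then 1 else 0) = g j"
proof -
  assume j: "j < n"
  have eq: "(\<lambda>i. nsmul (if i = j then 1 else 0) (g i)) = (\<lambda>i. if i = j then g i else 0)"
    by (simp add: fun_eq_iff)
  show ?thesis unfolding lincomb_def eq using j by simp
qed
lemma dotp_uvec: "j < n \<Longrightarrow> dotp n (uvec j) w = w j"
proof -
  assume j: "j < n"
  have eq: "(\<lambda>k. uvec j k * w k) = (\<lambda>k. if k = j then w k else 0)" by (auto simp: uvec_def)
  show ?thesis unfolding dotp_def eq using j by simp
qed

inductive_set rspan :: "(nat \<Rightarrow> rat) set \<Rightarrow> (nat \<Rightarrow> rat) set" for G where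
  sz: "(\<lambda>k. 0) \<in> rspan G"
| sg: "x \<in> G \<Longrightarrow> x \<in> rspan G"
| sa: "a \<in> rspan G \<Longrightarrow> b \<in> rspan G \<Longrightarrow> (\<lambda>k. a k + b k) \<in> rspan G"
| ss: "a \<in> rspan G \<Longrightarrow> (\<lambda>k. c * a k) \<in> rspan G"

lemma subsp_rspan: "subsp (rspan G)"
  unfolding subsp_def by (auto intro: rspan.intros)

lemma dotp_add: "dotp n (\<lambda>k. a k + b k) w = dotp n a w + dotp n b w"
  by (simp add: dotp_def algebra_simps sum.distrib)
lemma dotp_scale: "dotp n (\<lambda>k. c * a k) w = c * dotp n a w"
  by (simp add: dotp_def algebra_simps sum_distrib_left)

lemma rat_frac: "\<exists>p q. q > 0 \<and> (c::rat) = of_int p / of_int q"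
proof -
  obtain p q where pq: "quotient_of c = (p, q)" by (cases "quotient_of c")
  show ?thesis using quotient_of_denom_pos[OF pq] quotient_of_div[OF pq] by blast
qed

lemma rspan_inv:
  fixes g :: "nat \<Rightarrow> 'm::cancel_comm_monoid_add"
  assumes "e \<in> rspan G"
  and G: "\<And>x. x \<in> G \<Longrightarrow> \<exists>a b u. u \<in> mon_units \<and> lincomb n g a = lincomb n g b + u \<and> (\<forall>k. x k = of_nat (a k) - of_nat (b k))"
  shows "\<exists>D a b u. D > (0::nat) \<and> u \<in> mon_units \<and> lincomb n g a = lincomb n g b + u \<and> (\<forall>k. of_nat D * e k = of_nat (a k) - of_nat (b k))"
  using assms(1)
proof (induction e rule: rspan.induct)
  case sz
  show ?case by (intro exI[of _ 1] exI[of _ "\<lambda>k. 0"] exI[of _ 0]) (simp add: units_0)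
next
  case (sg x)
  then obtain a b u where "u \<in> mon_units" "lincomb n g a = lincomb n g b + u" "\<forall>k. x k = of_nat (a k) - of_nat (b k)"
    using G by blast
  then show ?case by (intro exI[of _ 1] exI[of _ a] exI[of _ b] exI[of _ u]) simp
next
  case (sa x y)
  then obtain D1 a1 b1 u1 where 1: "D1 > 0" "u1 \<in> mon_units" "lincomb n g a1 = lincomb n g b1 + u1"
    "\<forall>k. of_nat D1 * x k = of_nat (a1 k) - of_nat (b1 k)" by blast
  from sa obtain D2 a2 b2 u2 where 2: "D2 > 0" "u2 \<in> mon_units" "lincomb n g a2 = lincomb n g b2 + u2"
    "\<forall>k. of_nat D2 * y k = of_nat (a2 k) - of_nat (b2 k)" by blast
  have "lincomb n g (\<lambda>k. D2 * a1 k + D1 * a2 k) = lincomb n g (\<lambda>k. D2 * b1 k + D1 * b2 k) + (nsmul D2 u1 + nsmul D1 u2)"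
    using 1 2 by (simp add: lincomb_add lincomb_scale nsmul_add_x add_ac)
  moreover have "nsmul D2 u1 + nsmul D1 u2 \<in> mon_units" using 1 2 by (simp add: units_add units_nsmul)
  moreover have "\<forall>k. of_nat (D1 * D2) * (x k + y k) = of_nat (D2 * a1 k + D1 * a2 k) - of_nat (D2 * b1 k + D1 * b2 k)"
  proof
    fix k
    have "of_nat (D1 * D2) * (x k + y k) = of_nat D2 * (of_nat D1 * x k) + of_nat D1 * (of_nat D2 * y k)"
      by (simp add: algebra_simps)
    also have "\<dots> = of_nat D2 * (of_nat (a1 k) - of_nat (b1 k)) + of_nat D1 * (of_nat (a2 k) - of_nat (b2 k))"
      using 1(4) 2(4) by presburger
    also have "\<dots> = of_nat (D2 * a1 k + D1 * a2 k) - of_nat (D2 * b1 k + D1 * b2 k)"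
      by (simp add: algebra_simps)
    finally show "of_nat (D1 * D2) * (x k + y k) = of_nat (D2 * a1 k + D1 * a2 k) - of_nat (D2 * b1 k + D1 * b2 k)" .
  qed
  moreover have "D1 * D2 > 0" using 1 2 by simp
  ultimately show ?case by blast
next
  case (ss x c)
  then obtain D a b u where 1: "D > 0" "u \<in> mon_units" "lincomb n g a = lincomb n g b + u"
    "\<forall>k. of_nat D * x k = of_nat (a k) - of_nat (b k)" by blast
  obtain p q where pq: "q > 0" "c = of_int p / of_int q" using rat_frac by blast
  define m where "m = nat \<bar>p\<bar>"
  define D' where "D' = D * nat q"
  have D': "D' > 0" using 1 pq unfolding D'_def by simp
  have key: "of_nat D' * (c * x k) = of_int p * (of_nat (a k) - of_nat (b k))" for k
  proof -
    have "of_nat D' * (c * x k) = (of_int q * c) * (of_nat D * x k)"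
      using pq by (simp add: D'_def of_nat_mult of_nat_nat mult_ac)
    also have "\<dots> = of_int p * (of_nat D * x k)" using pq by simp
    finally show ?thesis using 1(4) by simp
  qed
  show ?case
  proof (cases "p \<ge> 0")
    case True
    then have pm: "of_int p = (of_nat m :: rat)" unfolding m_def by simp
    have "lincomb n g (\<lambda>k. m * a k) = lincomb n g (\<lambda>k. m * b k) + nsmul m u"
      using 1 by (simp add: lincomb_scale nsmul_add_x)
    moreover have "nsmul m u \<in> mon_units" using 1 by (simp add: units_nsmul)
    moreover have "\<forall>k. of_nat D' * (c * x k) = of_nat (m * a k) - of_nat (m * b k)"
      using key pm by (simp add: algebra_simps)
    ultimately show ?thesis using D' by blast
  next
    case False
    then have pm: "of_int p = - (of_nat m :: rat)" unfolding m_def by simp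
    obtain ui where ui: "ui \<in> mon_units" "u + ui = 0" using units_inv[OF 1(2)] by blast
    have "lincomb n g (\<lambda>k. m * b k) = lincomb n g (\<lambda>k. m * a k) + nsmul m ui"
    proof -
      have "lincomb n g (\<lambda>k. m * a k) + nsmul m ui = nsmul m (lincomb n g b + (u + ui))"
        using 1 by (simp add: lincomb_scale nsmul_add_x add_ac)
      then show ?thesis using ui by (simp add: lincomb_scale)
    qed
    moreover have "nsmul m ui \<in> mon_units" using ui by (simp add: units_nsmul)
    moreover have "\<forall>k. of_nat D' * (c * x k) = of_nat (m * b k) - of_nat (m * a k)"
      using key pm by (simp add: algebra_simps)
    ultimately show ?thesis using D' by blast
  qed
qed

lemma vcone_uvec_nonneg: "u \<in> vcone (uvec ` A) \<Longrightarrow> u k \<ge> 0"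
  by (induction u rule: vcone.induct) (auto simp: uvec_def)

lemma grading:
  fixes S :: "'m::cancel_comm_monoid_add set"
  assumes finS: "finite S" and genS: "mon_gen S = UNIV"
  shows "\<exists>\<phi>::'m \<Rightarrow> nat. (\<forall>a b. \<phi> (a + b) = \<phi> a + \<phi> b) \<and> (\<forall>m. \<phi> m = 0 \<longleftrightarrow> m \<in> mon_units)"
proof -
  obtain g where g: "bij_betw g {0..<card S} S" using ex_bij_betw_nat_finite[OF finS] by blast
  define n where "n = card S"
  have gS: "\<exists>j<n. g j = s" if "s \<in> S" for s
  proof -
    have "s \<in> g ` {0..<n}" using g that unfolding n_def bij_betw_def by simp
    then show ?thesis by auto
  qed
  have surj: "\<exists>a. lincomb n g a = m" for m
  proof -
    have "m \<in> mon_gen S" using genS by simp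
    then show ?thesis
    proof (induction m rule: mon_gen.induct)
      case zero then show ?case using lincomb_zero by blast
    next
      case (gen s)
      then obtain j where "j < n" "g j = s" using gS by blast
      then show ?case using lincomb_unit by blast
    next
      case (add a b)
      then obtain x y where "lincomb n g x = a" "lincomb n g y = b" by blast
      then show ?case using lincomb_add[of n g x y] by blast
    qed
  qed
  define G where "G = {x. \<exists>a b. lincomb n g a = lincomb n g b \<and> x = (\<lambda>k. of_nat (a k) - of_nat (b k))}
     \<union> uvec ` {j. j < n \<and> g j \<in> mon_units}"
  define R where "R = uvec ` {i. i < n \<and> g i \<notin> mon_units}"
  have finR: "finite R" unfolding R_def by simp
  have Ginv: "\<exists>a b u. u \<in> mon_units \<and> lincomb n g a = lincomb n g b + u \<and> (\<forall>k. x k = of_nat (a k) - of_nat (b k))"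
    if "x \<in> G" for x
  proof -
    from that consider "\<exists>a b. lincomb n g a = lincomb n g b \<and> x = (\<lambda>k. of_nat (a k) - of_nat (b k))"
      | j where "j < n" "g j \<in> mon_units" "x = uvec j" unfolding G_def by blast
    then show ?thesis
    proof cases
      case 1
      then obtain a b where "lincomb n g a = lincomb n g b" "x = (\<lambda>k. of_nat (a k) - of_nat (b k))" by blast
      then show ?thesis using units_0 by (intro exI[of _ a] exI[of _ b] exI[of _ 0]) simp
    next
      case 2
      have "lincomb n g (\<lambda>k. if k = j then 1 else 0) = lincomb n g (\<lambda>k. 0) + g j"
        using 2 by (simp add: lincomb_unit lincomb_zero)
      moreover have "\<forall>k. x k = of_nat (if k = j then 1 else 0) - of_nat 0" using 2 by (simp add: uvec_def)
      ultimately show ?thesis using 2 by blast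
    qed
  qed
  from FM[OF finR subsp_rspan, of G n]
  show ?thesis
  proof
    assume "\<exists>v\<in>ntcone R. \<exists>e\<in>rspan G. \<forall>k<n. v k = e k"
    then obtain v e where v: "v \<in> ntcone R" and e: "e \<in> rspan G" "\<forall>k<n. v k = e k" by blast
    obtain r c u where rcu: "r \<in> R" "c > 0" "u \<in> vcone R" "v = (\<lambda>k. c * r k + u k)"
      using v unfolding ntcone_def by blast
    obtain i where i: "i < n" "g i \<notin> mon_units" "r = uvec i" using rcu(1) unfolding R_def by blast
    have unn: "u k \<ge> 0" for k using rcu(3) vcone_uvec_nonneg unfolding R_def by blast
    have vnn: "v k \<ge> 0" for k using unn[of k] rcu(2) unfolding rcu(4) i(3) uvec_def by simp
    have vi: "v i > 0" using unn[of i] rcu(2) unfolding rcu(4) i(3) uvec_def by simp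
    obtain D a b u0 where D: "D > 0" "u0 \<in> mon_units" "lincomb n g a = lincomb n g b + u0"
      "\<forall>k. of_nat D * e k = of_nat (a k) - of_nat (b k)"
      using rspan_inv[OF e(1) Ginv] by blast
    define cc where "cc k = a k - b k" for k
    have abk: "a k = b k + cc k" and cck: "of_nat (cc k) = of_nat D * v k" if "k < n" for k
    proof -
      have "of_nat D * v k = of_nat (a k) - of_nat (b k)" using D(4) e(2) that by simp
      moreover have "of_nat D * v k \<ge> 0" using vnn[of k] by simp
      ultimately have "b k \<le> a k" by simp
      then show "a k = b k + cc k" "of_nat (cc k) = of_nat D * v k"
        unfolding cc_def using \<open>of_nat D * v k = _\<close> by (simp_all add: of_nat_diff)
    qed
    have "lincomb n g a = lincomb n g (\<lambda>k. b k + cc k)"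
      unfolding lincomb_def using abk by (intro sum.cong) auto
    then have "lincomb n g b + lincomb n g cc = lincomb n g b + u0" using D(3) by (simp add: lincomb_add)
    then have lc: "lincomb n g cc \<in> mon_units" using D(2) by simp
    have "of_nat D * v i > (0::rat)" using vi D(1) by simp
    then have "(of_nat (cc i)::rat) > 0" using cck[OF i(1)] by simp
    then have "cc i > 0" by simp
    then obtain c' where c': "cc i = Suc c'" using not0_implies_Suc by blast
    have "lincomb n g cc = nsmul (cc i) (g i) + (\<Sum>k\<in>{..<n} - {i}. nsmul (cc k) (g k))"
      unfolding lincomb_def using i(1) by (simp add: sum.remove)
    also have "\<dots> = g i + (nsmul c' (g i) + (\<Sum>k\<in>{..<n} - {i}. nsmul (cc k) (g k)))"
      unfolding c' nsmul_Suc by (simp add: add_ac)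
    finally have "g i + (nsmul c' (g i) + (\<Sum>k\<in>{..<n} - {i}. nsmul (cc k) (g k))) \<in> mon_units"
      using lc by simp
    then have "g i \<in> mon_units" by (rule units_left)
    then show ?thesis using i(2) by blast
  next
    assume "\<exists>w. (\<forall>e\<in>rspan G. dotp n e w = 0) \<and> (\<forall>r\<in>R. 0 < dotp n r w)"
    then obtain w where w: "\<forall>e\<in>rspan G. dotp n e w = 0" "\<forall>r\<in>R. 0 < dotp n r w" by blast
    have wpos: "w i > 0" if "i < n" "g i \<notin> mon_units" for i
      using w(2) that dotp_uvec[of i n w] unfolding R_def by auto
    have wzero: "w j = 0" if "j < n" "g j \<in> mon_units" for j
    proof -
      have "uvec j \<in> rspan G" unfolding G_def using that by (intro rspan.sg) auto
      then show ?thesis using w(1) dotp_uvec[OF that(1)] by auto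
    qed
    have wnn: "w k \<ge> 0" if "k < n" for k
    proof (cases "g k \<in> mon_units")
      case True then show ?thesis using wzero[OF that] by simp
    next
      case False then show ?thesis using wpos[OF that False] by simp
    qed
    have wrel: "(\<Sum>k<n. of_nat (a k) * w k) = (\<Sum>k<n. of_nat (b k) * w k)" if "lincomb n g a = lincomb n g b" for a b
    proof -
      have "(\<lambda>k. of_nat (a k) - of_nat (b k)) \<in> rspan G" unfolding G_def using that by (intro rspan.sg) blast
      then have "dotp n (\<lambda>k. of_nat (a k) - of_nat (b k)) w = 0" using w(1) by blast
      then show ?thesis by (simp add: dotp_def algebra_simps sum_subtractf)
    qed
    obtain D :: nat where D: "D > 0" "\<forall>k<n. of_nat D * w k \<in> \<int>" using clear_denoms by blast
    define W where "W k = nat \<lfloor>of_nat D * w k\<rfloor>" for k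
    have Wk: "of_nat (W k) = of_nat D * w k" if "k < n" for k
    proof -
      have "of_nat D * w k \<in> \<int>" using D(2) that by blast
      then obtain z where z: "of_nat D * w k = of_int z" by (auto elim: Ints_cases)
      have "(of_int z :: rat) \<ge> 0" unfolding z[symmetric] using wnn[OF that] by simp
      then have "z \<ge> 0" by simp
      then show ?thesis unfolding W_def z by simp
    qed
    have Wrel: "(\<Sum>k<n. a k * W k) = (\<Sum>k<n. b k * W k)" if "lincomb n g a = lincomb n g b" for a b
    proof -
      have "of_nat (\<Sum>k<n. a k * W k) = (of_nat D :: rat) * (\<Sum>k<n. of_nat (a k) * w k)"
        by (simp add: Wk sum_distrib_left mult_ac)
      also have "\<dots> = of_nat D * (\<Sum>k<n. of_nat (b k) * w k)" using wrel[OF that] by simp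
      also have "\<dots> = of_nat (\<Sum>k<n. b k * W k)"
        by (simp add: Wk sum_distrib_left mult_ac)
      finally show ?thesis by (simp only: of_nat_eq_iff)
    qed
    define rep where "rep m = (SOME a. lincomb n g a = m)" for m
    have rep: "lincomb n g (rep m) = m" for m unfolding rep_def using someI_ex[OF surj] .
    define \<phi> where "\<phi> m = (\<Sum>k<n. rep m k * W k)" for m
    have \<phi>rep: "\<phi> m = (\<Sum>k<n. a k * W k)" if "lincomb n g a = m" for a m
      unfolding \<phi>_def using Wrel[of a "rep m"] rep[of m] that by simp
    have add: "\<phi> (x + y) = \<phi> x + \<phi> y" for x y
    proof -
      have "lincomb n g (\<lambda>k. rep x k + rep y k) = x + y" by (simp add: lincomb_add rep)
      then have "\<phi> (x + y) = (\<Sum>k<n. (rep x k + rep y k) * W k)" by (rule \<phi>rep)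
      then show ?thesis unfolding \<phi>_def by (simp add: sum.distrib add_mult_distrib)
    qed
    have z0: "\<phi> 0 = 0" using add[of 0 0] by simp
    have "\<phi> m = 0 \<longleftrightarrow> m \<in> mon_units" for m
    proof
      assume "\<phi> m = 0"
      then have "\<forall>k\<in>{..<n}. rep m k * W k = 0" unfolding \<phi>_def by simp
      then have "\<forall>k\<in>{..<n}. nsmul (rep m k) (g k) \<in> mon_units"
      proof (intro ballI)
        fix k assume k: "k \<in> {..<n}" and "\<forall>k\<in>{..<n}. rep m k * W k = 0"
        then have "rep m k = 0 \<or> W k = 0" by simp
        then show "nsmul (rep m k) (g k) \<in> mon_units"
        proof
          assume "rep m k = 0" then show ?thesis by (simp add: units_0)
        next
          assume "W k = 0"
          then have "w k = 0" using Wk[of k] k D(1) by simp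
          then have "g k \<in> mon_units" using wpos[of k] k by fastforce
          then show ?thesis by (rule units_nsmul)
        qed
      qed
      then have "lincomb n g (rep m) \<in> mon_units" unfolding lincomb_def by (rule units_sum)
      then show "m \<in> mon_units" using rep by simp
    next
      assume "m \<in> mon_units"
      then obtain m' where "m + m' = 0" unfolding mon_units_def by blast
      then have "\<phi> m + \<phi> m' = 0" using add[of m m'] z0 by simp
      then show "\<phi> m = 0" by simp
    qed
    then show ?thesis using add by blast
  qed
qed


lemma pm_expand: "f = (\<Sum>m\<in>Poly_Mapping.keys f. Poly_Mapping.single m (Poly_Mapping.lookup f m))"
proof (rule poly_mapping_eqI)
  fix k
  have "Poly_Mapping.lookup (\<Sum>m\<in>Poly_Mapping.keys f. Poly_Mapping.single m (Poly_Mapping.lookup f m)) k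
      = (\<Sum>m\<in>Poly_Mapping.keys f. if m = k then Poly_Mapping.lookup f m else 0)"
    by (simp add: lookup_sum lookup_single when_def)
  also have "\<dots> = Poly_Mapping.lookup f k" by (simp add: in_keys_iff)
  finally show "Poly_Mapping.lookup f k = Poly_Mapping.lookup (\<Sum>m\<in>Poly_Mapping.keys f. Poly_Mapping.single m (Poly_Mapping.lookup f m)) k"
    by simp
qed

lemma alg_ind_K:
  assumes "finite K" "Poly_Mapping.keys f \<subseteq> K"
  shows "alg_ind G f = (\<Sum>m\<in>K. case G m of None \<Rightarrow> 0 | Some n \<Rightarrow> Poly_Mapping.single n (Poly_Mapping.lookup f m))"
  unfolding alg_ind_def
proof (rule sum.mono_neutral_left[OF assms(1) assms(2)], intro ballI)
  fix m assume "m \<in> K - Poly_Mapping.keys f"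
  then have "Poly_Mapping.lookup f m = 0" by (simp add: in_keys_iff)
  then show "(case G m of None \<Rightarrow> 0 | Some n \<Rightarrow> Poly_Mapping.single n (Poly_Mapping.lookup f m)) = 0"
    by (cases "G m") simp_all
qed

lemma alg_ind_add: "alg_ind G (f + g) = alg_ind G f + alg_ind G g"
proof -
  define K where "K = Poly_Mapping.keys f \<union> Poly_Mapping.keys g"
  have fK: "finite K" unfolding K_def by simp
  have "Poly_Mapping.keys (f + g) \<subseteq> K" unfolding K_def by (rule keys_add)
  then have "alg_ind G (f + g) = (\<Sum>m\<in>K. case G m of None \<Rightarrow> 0 | Some n \<Rightarrow> Poly_Mapping.single n (Poly_Mapping.lookup (f + g) m))"
    using alg_ind_K fK by blast
  also have "\<dots> = (\<Sum>m\<in>K. (case G m of None \<Rightarrow> 0 | Some n \<Rightarrow> Poly_Mapping.single n (Poly_Mapping.lookup f m))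
      + (case G m of None \<Rightarrow> 0 | Some n \<Rightarrow> Poly_Mapping.single n (Poly_Mapping.lookup g m)))"
    by (intro sum.cong refl, case_tac "G x") (simp_all add: lookup_add single_add)
  also have "\<dots> = alg_ind G f + alg_ind G g"
    by (simp add: sum.distrib alg_ind_K[OF fK] K_def)
  finally show ?thesis .
qed

lemma alg_ind_zero [simp]: "alg_ind G 0 = 0"
  by (simp add: alg_ind_def)

lemma alg_ind_sum: "alg_ind G (sum F A) = (\<Sum>i\<in>A. alg_ind G (F i))"
  by (induction A rule: infinite_finite_induct) (simp_all add: alg_ind_add)

lemma alg_ind_single: "alg_ind G (Poly_Mapping.single a c) = (case G a of None \<Rightarrow> 0 | Some n \<Rightarrow> Poly_Mapping.single n c)"
proof -
  have "alg_ind G (Poly_Mapping.single a c) = (\<Sum>m\<in>{a}. case G m of None \<Rightarrow> 0 | Some n \<Rightarrow> Poly_Mapping.single n (Poly_Mapping.lookup (Poly_Mapping.single a c) m))"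
    by (rule alg_ind_K) auto
  then show ?thesis by (cases "G a") simp_all
qed

definition Hh :: "('m \<Rightarrow> nat) \<Rightarrow> ('m::comm_monoid_add \<Rightarrow>\<^sub>0 'k::field) \<Rightarrow> ('m \<Rightarrow>\<^sub>0 'k) poly" where
  "Hh \<phi> f = (\<Sum>m\<in>Poly_Mapping.keys f. monom (Poly_Mapping.single m (Poly_Mapping.lookup f m)) (\<phi> m))"

lemma Hh_K:
  assumes "finite K" "Poly_Mapping.keys f \<subseteq> K"
  shows "Hh \<phi> f = (\<Sum>m\<in>K. monom (Poly_Mapping.single m (Poly_Mapping.lookup f m)) (\<phi> m))"
  unfolding Hh_def
  by (rule sum.mono_neutral_left[OF assms(1) assms(2)]) (simp add: in_keys_iff)

lemma Hh_add: "Hh \<phi> (f + g) = Hh \<phi> f + Hh \<phi> g"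
proof -
  define K where "K = Poly_Mapping.keys f \<union> Poly_Mapping.keys g"
  have fK: "finite K" unfolding K_def by simp
  have "Poly_Mapping.keys (f + g) \<subseteq> K" unfolding K_def by (rule keys_add)
  then have "Hh \<phi> (f + g) = (\<Sum>m\<in>K. monom (Poly_Mapping.single m (Poly_Mapping.lookup (f + g) m)) (\<phi> m))"
    using Hh_K fK by blast
  also have "\<dots> = (\<Sum>m\<in>K. monom (Poly_Mapping.single m (Poly_Mapping.lookup f m)) (\<phi> m)
      + monom (Poly_Mapping.single m (Poly_Mapping.lookup g m)) (\<phi> m))"
    by (simp add: lookup_add single_add add_monom)
  also have "\<dots> = Hh \<phi> f + Hh \<phi> g"
    by (simp add: sum.distrib Hh_K[OF fK] K_def)
  finally show ?thesis .
qed

lemma Hh_zero [simp]: "Hh \<phi> 0 = 0" by (simp add: Hh_def)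

lemma Hh_sum: "Hh \<phi> (sum F A) = (\<Sum>i\<in>A. Hh \<phi> (F i))"
  by (induction A rule: infinite_finite_induct) (simp_all add: Hh_add)

lemma Hh_single: "Hh \<phi> (Poly_Mapping.single a c) = monom (Poly_Mapping.single a c) (\<phi> a)"
proof -
  have "Hh \<phi> (Poly_Mapping.single a c) = (\<Sum>m\<in>{a}. monom (Poly_Mapping.single m (Poly_Mapping.lookup (Poly_Mapping.single a c) m)) (\<phi> m))"
    by (rule Hh_K) auto
  then show ?thesis by simp
qed

lemma Hh_mult:
  assumes add: "\<And>a b. \<phi> (a + b) = \<phi> a + \<phi> b"
  shows "Hh \<phi> (f * g) = Hh \<phi> f * Hh \<phi> g"
proof -
  let ?s = "\<lambda>f m. Poly_Mapping.single m (Poly_Mapping.lookup f m)"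
  have "f * g = (\<Sum>a\<in>Poly_Mapping.keys f. ?s f a) * (\<Sum>b\<in>Poly_Mapping.keys g. ?s g b)"
    using pm_expand[of f] pm_expand[of g] by simp
  also have "\<dots> = (\<Sum>a\<in>Poly_Mapping.keys f. \<Sum>b\<in>Poly_Mapping.keys g. ?s f a * ?s g b)"
    by (rule sum_product)
  finally have fg: "f * g = \<dots>" .
  have "Hh \<phi> (f * g) = (\<Sum>a\<in>Poly_Mapping.keys f. \<Sum>b\<in>Poly_Mapping.keys g. Hh \<phi> (?s f a) * Hh \<phi> (?s g b))"
    unfolding fg Hh_sum by (simp add: mult_single Hh_single mult_monom add)
  also have "\<dots> = (\<Sum>a\<in>Poly_Mapping.keys f. Hh \<phi> (?s f a)) * (\<Sum>b\<in>Poly_Mapping.keys g. Hh \<phi> (?s g b))"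
    by (rule sum_product[symmetric])
  also have "\<dots> = Hh \<phi> f * Hh \<phi> g"
    unfolding Hh_sum[symmetric] using pm_expand[of f] pm_expand[of g] by simp
  finally show ?thesis .
qed

lemma Hh_poly: "poly (Hh \<phi> f) x = (\<Sum>m\<in>Poly_Mapping.keys f. Poly_Mapping.single m (Poly_Mapping.lookup f m) * x ^ \<phi> m)"
  by (simp add: Hh_def poly_sum poly_monom)

theorem lemma1p5:
  fixes \<iota> :: "'u::ab_group_add \<Rightarrow> 'm::cancel_comm_monoid_add"
  assumes fg: "fin_gen_monoid TYPE('m)"
    and tf: "gp_torsion_free TYPE('m)"
    and inj: "inj \<iota>"
    and hom_add: "\<And>a b. \<iota> (a + b) = \<iota> a + \<iota> b"
    and hom_zero: "\<iota> 0 = 0"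
    and units: "range \<iota> = mon_units"
  shows "(alg_ind (unit_retr \<iota>) :: ('m \<Rightarrow>\<^sub>0 'k::field) \<Rightarrow> ('u \<Rightarrow>\<^sub>0 'k))
           \<circ> alg_ind (Some \<circ> \<iota>) = id
       \<and> naive_A1_homotopic
           ((alg_ind (Some \<circ> \<iota>) :: ('u \<Rightarrow>\<^sub>0 'k) \<Rightarrow> ('m \<Rightarrow>\<^sub>0 'k)) \<circ> alg_ind (unit_retr \<iota>)) id"
proof
  let ?s = "\<lambda>f m. Poly_Mapping.single m (Poly_Mapping.lookup f m)"
  show "(alg_ind (unit_retr \<iota>) :: ('m \<Rightarrow>\<^sub>0 'k::field) \<Rightarrow> ('u \<Rightarrow>\<^sub>0 'k)) \<circ> alg_ind (Some \<circ> \<iota>) = id"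
  proof
    fix f :: "'u \<Rightarrow>\<^sub>0 'k"
    have "alg_ind (Some \<circ> \<iota>) f = (\<Sum>u\<in>Poly_Mapping.keys f. Poly_Mapping.single (\<iota> u) (Poly_Mapping.lookup f u))"
      by (simp add: alg_ind_def)
    then have "alg_ind (unit_retr \<iota>) (alg_ind (Some \<circ> \<iota>) f) = (\<Sum>u\<in>Poly_Mapping.keys f. ?s f u)"
      by (simp add: alg_ind_sum alg_ind_single unit_retr_def inv_f_f[OF inj])
    also have "\<dots> = f" using pm_expand[of f] by simp
    finally show "((alg_ind (unit_retr \<iota>) :: ('m \<Rightarrow>\<^sub>0 'k::field) \<Rightarrow> ('u \<Rightarrow>\<^sub>0 'k)) \<circ> alg_ind (Some \<circ> \<iota>)) f = id f"
      by simp
  qed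
next
  let ?s = "\<lambda>f m. Poly_Mapping.single m (Poly_Mapping.lookup f m)"
  obtain S :: "'m set" where S: "finite S" "mon_gen S = UNIV" using fg unfolding fin_gen_monoid_def by blast
  obtain \<phi> :: "'m \<Rightarrow> nat" where \<phi>: "\<And>a b. \<phi> (a + b) = \<phi> a + \<phi> b" "\<And>m. \<phi> m = 0 \<longleftrightarrow> m \<in> mon_units"
    using grading[OF S] by blast
  have \<phi>0: "\<phi> 0 = 0" using \<phi>(1)[of 0 0] by simp
  let ?P = "(alg_ind (Some \<circ> \<iota>) :: ('u \<Rightarrow>\<^sub>0 'k) \<Rightarrow> ('m \<Rightarrow>\<^sub>0 'k)) \<circ> alg_ind (unit_retr \<iota>)"
  have P: "?P f = (\<Sum>m\<in>Poly_Mapping.keys f. if m \<in> mon_units then ?s f m else 0)" for f :: "'m \<Rightarrow>\<^sub>0 'k"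
  proof -
    have "?P f = (\<Sum>m\<in>Poly_Mapping.keys f. alg_ind (Some \<circ> \<iota>)
        (case unit_retr \<iota> m of None \<Rightarrow> 0 | Some n \<Rightarrow> Poly_Mapping.single n (Poly_Mapping.lookup f m)))"
      by (simp add: alg_ind_def[of "unit_retr \<iota>"] alg_ind_sum)
    also have "\<dots> = (\<Sum>m\<in>Poly_Mapping.keys f. if m \<in> mon_units then ?s f m else 0)"
    proof (rule sum.cong[OF refl])
      fix m
      show "alg_ind (Some \<circ> \<iota>) (case unit_retr \<iota> m of None \<Rightarrow> 0 | Some n \<Rightarrow> Poly_Mapping.single n (Poly_Mapping.lookup f m))
          = (if m \<in> mon_units then ?s f m else 0)"
      proof (cases "m \<in> range \<iota>")
        case True
        then show ?thesis using units by (simp add: unit_retr_def alg_ind_single f_inv_into_f)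
      next
        case False
        then show ?thesis using units by (simp add: unit_retr_def)
      qed
    qed
    finally show ?thesis .
  qed
  define H where "H = (Hh \<phi> :: ('m \<Rightarrow>\<^sub>0 'k) \<Rightarrow> ('m \<Rightarrow>\<^sub>0 'k) poly)"
  have hom: "kalg_hom kmon kmon_poly H"
    unfolding kalg_hom_def H_def
  proof (intro conjI allI)
    fix x y :: "'m \<Rightarrow>\<^sub>0 'k"
    show "Hh \<phi> (x + y) = Hh \<phi> x + Hh \<phi> y" by (rule Hh_add)
    show "Hh \<phi> (x * y) = Hh \<phi> x * Hh \<phi> y" by (rule Hh_mult[OF \<phi>(1)])
  next
    have "Hh \<phi> (Poly_Mapping.single 0 (1::'k) :: 'm \<Rightarrow>\<^sub>0 'k) = 1"
      by (simp only: Hh_single \<phi>0) (simp add: monom_0)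
    then show "Hh \<phi> (1 :: 'm \<Rightarrow>\<^sub>0 'k) = 1" by simp
  next
    fix c :: 'k
    show "Hh \<phi> (kmon c :: 'm \<Rightarrow>\<^sub>0 'k) = kmon_poly c"
      unfolding kmon_def kmon_poly_def by (simp add: Hh_single \<phi>0 monom_0)
  qed
  have at0: "(\<lambda>a. poly (H a) 0) = ?P"
  proof
    fix f :: "'m \<Rightarrow>\<^sub>0 'k"
    show "poly (H f) 0 = ?P f" unfolding H_def Hh_poly P
      by (intro sum.cong refl) (simp add: power_0_left \<phi>(2))
  qed
  have at1: "(\<lambda>a. poly (H a) 1) = id"
  proof
    fix f :: "'m \<Rightarrow>\<^sub>0 'k"
    show "poly (H f) 1 = id f" unfolding H_def Hh_poly using pm_expand[of f] by simp
  qed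
  have "naive_htpy_step ?P id" unfolding naive_htpy_step_def using hom at0 at1 by blast
  then show "naive_A1_homotopic ?P id" unfolding naive_A1_homotopic_def by blast
qed

end
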